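(* Let $F$ be a field of characteristic zero, let $\mathcal{Z}=\langle z\rangle$ be the infinite cyclic group, and let $\mathfrak{S}$ be a Schur ring over $\mathcal{Z}$. If $C\in\mathcal{D}(\mathfrak{S})$ is a primitive set with $z\in C$, then $C=\{z\}$ or $C=\{z,z^{-1}\}$.
   Context: For finite $C\subseteq G$, $\overline{C}=\sum_{g\in C}g\in F[G]$ and $C^*=\{g^{-1}\mid g\in C\}$. A Schur ring over a group $G$ is an $F$-subspace $\mathfrak{S}=\operatorname{Span}_F\{\overline{C}\mid C\in\mathcal{D}(\mathfrak{S})\}$ of $F[G]$ where $\mathcal{D}(\mathfrak{S})$ is a partition of $G$ into finite sets (the primitive sets) such that (i) $\{1\}\in\mathcal{D}(\mathfrak{S})$; (ii) $C\in\mathcal{D}(\mathfrak{S})\Rightarrow C^*\in\mathcal{D}(\mathfrak{S})$; (iii) for all $C,D\in\mathcal{D}(\mathfrak{S})$, $\overline{C}\,\overline{D}=\sum_{E}\lambda_{CDE}\overline{E}$ with finitely many nonzero $\lambda_{CDE}\in F$. *)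

theory Defs
  imports Main
begin

text \<open>The infinite cyclic group Z = <z> is modelled additively by the type int:
  the generator z is 1, z^{-1} is -1, and the group product is +.
  An element of the group algebra F[Z] is a finitely supported function int => F;
  for a finite set C, its class sum is the indicator function of C.\<close>

definition class_sum :: "int set \<Rightarrow> int \<Rightarrow> 'a::field" where
  "class_sum C = (\<lambda>g. if g \<in> C then 1 else 0)"

definition class_prod :: "int set \<Rightarrow> int set \<Rightarrow> int \<Rightarrow> 'a::field" where
  "class_prod C D = (\<lambda>g. of_nat (card {(c, d). c \<in> C \<and> d \<in> D \<and> c + d = g}))"

definition schur_partition :: "'a::field itself \<Rightarrow> int set set \<Rightarrow> bool" where
  "schur_partition (_ :: 'a itself) \<D> \<longleftrightarrow>
     (\<forall>C\<in>\<D>. C \<noteq> {} \<and> finite C) \<and>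
     \<Union>\<D> = UNIV \<and>
     (\<forall>C\<in>\<D>. \<forall>D\<in>\<D>. C \<noteq> D \<longrightarrow> C \<inter> D = {}) \<and>
     {0} \<in> \<D> \<and>
     (\<forall>C\<in>\<D>. uminus ` C \<in> \<D>) \<and>
     (\<forall>C\<in>\<D>. \<forall>D\<in>\<D>. \<exists>lam :: int set \<Rightarrow> 'a.
         finite {E \<in> \<D>. lam E \<noteq> 0} \<and>
         (class_prod C D :: int \<Rightarrow> 'a) =
           (\<lambda>g. \<Sum>E\<in>{E \<in> \<D>. lam E \<noteq> 0}. lam E * class_sum E g))"

end

theory Submission
  imports Defs "HOL-Library.Multiset"
begin

definition cnt :: "int set \<Rightarrow> int set \<Rightarrow> int \<Rightarrow> nat" where
  "cnt X Y g = card {(x, y). x \<in> X \<and> y \<in> Y \<and> x + y = g}"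

lemma F1:
  assumes sp: "schur_partition TYPE('a::field_char_0) D"
    and X: "X \<in> D" and Y: "Y \<in> D" and Z: "Z \<in> D" and g: "g \<in> Z" and g': "g' \<in> Z"
  shows "cnt X Y g = cnt X Y g'"
proof -
  from sp X Y obtain lam :: "int set \<Rightarrow> 'a" where
    eq: "(class_prod X Y :: int \<Rightarrow> 'a) = (\<lambda>g. \<Sum>E\<in>{E \<in> D. lam E \<noteq> 0}. lam E * class_sum E g)"
    unfolding schur_partition_def by blast
  have disj: "\<forall>C\<in>D. \<forall>E\<in>D. C \<noteq> E \<longrightarrow> C \<inter> E = {}"
    using sp unfolding schur_partition_def by blast
  have cs: "(class_sum E g :: 'a) = class_sum E g'" if "E \<in> D" for E
  proof -
    have "g \<in> E \<longleftrightarrow> g' \<in> E"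
      using disj that Z g g' by blast
    thus ?thesis by (simp add: class_sum_def)
  qed
  have "(class_prod X Y g :: 'a) = class_prod X Y g'"
    unfolding eq using cs by (intro sum.cong) auto
  hence "(of_nat (cnt X Y g) :: 'a) = of_nat (cnt X Y g')"
    by (simp add: class_prod_def cnt_def)
  thus ?thesis by simp
qed

definition tup :: "int set \<Rightarrow> nat \<Rightarrow> int \<Rightarrow> nat" where
  "tup X k g = card {xs. set xs \<subseteq> X \<and> length xs = k \<and> sum_list xs = g}"

lemma tup_fin: "finite X \<Longrightarrow> finite {xs. set xs \<subseteq> X \<and> length xs = k \<and> sum_list xs = g}"
  by (rule finite_subset[OF _ finite_lists_length_eq[of X k]]) auto

lemma tup_0: "tup X 0 g = (if g = 0 then 1 else 0)"
proof -
  have "{xs. set xs \<subseteq> X \<and> length xs = 0 \<and> sum_list xs = g} = (if g = 0 then {[]} else {})"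
    by auto
  thus ?thesis by (simp add: tup_def)
qed

lemma tup_Suc:
  assumes "finite X"
  shows "tup X (Suc k) g = (\<Sum>y\<in>X. tup X k (g - y))"
proof -
  have "{xs. set xs \<subseteq> X \<and> length xs = Suc k \<and> sum_list xs = g}
     = (\<Union>y\<in>X. (\<lambda>ys. y # ys) ` {ys. set ys \<subseteq> X \<and> length ys = k \<and> sum_list ys = g - y})"
  proof (intro set_eqI iffI)
    fix xs assume "xs \<in> {xs. set xs \<subseteq> X \<and> length xs = Suc k \<and> sum_list xs = g}"
    then show "xs \<in> (\<Union>y\<in>X. (\<lambda>ys. y # ys) ` {ys. set ys \<subseteq> X \<and> length ys = k \<and> sum_list ys = g - y})"
      by (cases xs) (auto intro!: bexI[where x="hd xs"] image_eqI[where x="tl xs"])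
  qed auto
  hence "tup X (Suc k) g = card (\<Union>y\<in>X. (\<lambda>ys. y # ys) ` {ys. set ys \<subseteq> X \<and> length ys = k \<and> sum_list ys = g - y})"
    by (simp add: tup_def)
  also have "\<dots> = (\<Sum>y\<in>X. card ((\<lambda>ys. y # ys) ` {ys. set ys \<subseteq> X \<and> length ys = k \<and> sum_list ys = g - y}))"
    using assms by (intro card_UN_disjoint) (auto intro: tup_fin)
  also have "\<dots> = (\<Sum>y\<in>X. tup X k (g - y))"
    by (intro sum.cong refl) (simp add: card_image tup_def)
  finally show ?thesis .
qed

lemma sum_le_rep: "(\<forall>x\<in>set xs. x \<le> t) \<Longrightarrow> sum_list xs \<le> int (length xs) * (t::int)"
  by (induction xs) (auto simp: algebra_simps)

lemma sum_eq_rep: "(\<forall>x\<in>set xs. x \<le> t) \<Longrightarrow> sum_list xs = int (length xs) * (t::int)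
   \<Longrightarrow> xs = replicate (length xs) t"
proof (induction xs)
  case (Cons a xs)
  have "sum_list xs \<le> int (length xs) * t" using Cons.prems sum_le_rep by auto
  moreover have "a \<le> t" using Cons.prems by auto
  ultimately have "a = t" "sum_list xs = int (length xs) * t" using Cons.prems by (auto simp: algebra_simps)
  thus ?case using Cons by auto
qed simp

lemma tup_top:
  assumes "t \<in> X" "\<forall>x\<in>X. x \<le> t"
  shows "tup X k (int k * t) = 1"
proof -
  have "{xs. set xs \<subseteq> X \<and> length xs = k \<and> sum_list xs = int k * t} = {replicate k t}"
  proof (intro set_eqI iffI)
    fix xs assume "xs \<in> {xs. set xs \<subseteq> X \<and> length xs = k \<and> sum_list xs = int k * t}"
    thus "xs \<in> {replicate k t}" using sum_eq_rep[of xs t] assms by auto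
  qed (use assms in \<open>auto simp: sum_list_replicate\<close>)
  thus ?thesis by (simp add: tup_def)
qed

lemma tup_one:
  assumes "tup X k g = 1" "k \<ge> 1"
  shows "\<exists>c\<in>X. g = int k * c"
proof -
  let ?S = "{xs. set xs \<subseteq> X \<and> length xs = k \<and> sum_list xs = g}"
  have "card ?S = 1" using assms(1) unfolding tup_def .
  then obtain xs where S: "?S = {xs}" by (rule card_1_singletonE)
  hence xs: "set xs \<subseteq> X" "length xs = k" "sum_list xs = g" by auto
  have const: "xs ! i = xs ! 0" if "i < k" for i
  proof (rule ccontr)
    assume ne: "xs ! i \<noteq> xs ! 0"
    let ?ys = "xs[0 := xs ! i, i := xs ! 0]"
    have m: "mset ?ys = mset xs" using mset_swap[of i xs 0] that xs assms(2) by simp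
    have "set ?ys = set xs" using arg_cong[OF m, of set_mset] by simp
    moreover have "sum_list ?ys = sum_list xs" using arg_cong[OF m, of sum_mset] by (simp add: sum_mset_sum_list)
    moreover have "length ?ys = k" using xs by simp
    ultimately have "?ys \<in> ?S" using xs by simp
    hence "?ys = xs" using S by blast
    moreover have "?ys ! 0 = xs ! i" using ne that xs assms(2)
      by (cases "i = 0") auto
    ultimately show False using ne by simp
  qed
  have "xs = replicate k (xs ! 0)"
  proof (rule nth_equalityI)
    show "length xs = length (replicate k (xs ! 0))" using xs(2) by simp
    fix i assume "i < length xs"
    then have "xs ! i = xs ! 0" using const[of i] xs(2) by simp
    then show "xs ! i = replicate k (xs ! 0) ! i" using \<open>i < length xs\<close> xs(2) by simp
  qed
  hence "sum_list xs = sum_list (replicate k (xs ! 0))" by (rule arg_cong)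
  also have "\<dots> = int k * xs ! 0" by (simp add: sum_list_replicate)
  finally have "g = int k * xs ! 0" using xs(3) by simp
  have "0 < length xs" using xs assms(2) by simp
  then have "xs ! 0 \<in> X" using xs(1) nth_mem[of 0 xs] by blast
  with \<open>g = int k * xs ! 0\<close> show ?thesis by blast
qed


lemma tup_two:
  assumes fin: "finite X" and X: "x \<in> X" "t \<in> X" "s \<in> X" and lt: "s < x" "x < t"
  shows "tup X (2 * nat (t - s)) (int (2 * nat (t - s)) * x) \<ge> 2"
proof -
  define k where "k = 2 * nat (t - s)"
  define j where "j = 2 * nat (x - s)"
  have kj: "j \<le> k" using lt by (simp add: k_def j_def)
  let ?S = "{xs. set xs \<subseteq> X \<and> length xs = k \<and> sum_list xs = int k * x}"
  let ?l1 = "replicate k x"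
  let ?l2 = "replicate j t @ replicate (k - j) s"
  have "int j * t + int (k - j) * s = int k * x"
  proof -
    have h: "int j = 2 * (x - s)" "int k = 2 * (t - s)" "int (k - j) = 2 * (t - x)"
      using lt kj by (simp_all add: k_def j_def of_nat_diff)
    show ?thesis by (simp only: h) (simp add: algebra_simps)
  qed
  hence "?l2 \<in> ?S" using X kj by (auto simp: sum_list_replicate)
  moreover have "?l1 \<in> ?S" using X by (auto simp: sum_list_replicate)
  moreover have "?l1 \<noteq> ?l2"
  proof
    assume "?l1 = ?l2"
    moreover have "0 < j" "j < k" using lt by (simp_all add: k_def j_def)
    ultimately have "?l1 ! 0 = ?l2 ! 0" by simp
    thus False using \<open>0 < j\<close> \<open>j < k\<close> lt by (simp add: nth_append)
  qed
  ultimately have "card {?l1, ?l2} \<le> card ?S"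
    by (intro card_mono tup_fin fin) auto
  thus ?thesis using \<open>?l1 \<noteq> ?l2\<close> by (simp add: tup_def k_def)
qed

locale SP =
  fixes D :: "int set set"
  assumes fin: "\<And>C. C \<in> D \<Longrightarrow> C \<noteq> {} \<and> finite C"
    and cover: "\<Union>D = UNIV"
    and disj: "\<And>C E. C \<in> D \<Longrightarrow> E \<in> D \<Longrightarrow> C \<noteq> E \<Longrightarrow> C \<inter> E = {}"
    and zero: "{0} \<in> D"
    and neg: "\<And>C. C \<in> D \<Longrightarrow> uminus ` C \<in> D"
    and F: "\<And>X Y Z g g'. X \<in> D \<Longrightarrow> Y \<in> D \<Longrightarrow> Z \<in> D \<Longrightarrow> g \<in> Z \<Longrightarrow> g' \<in> Z
              \<Longrightarrow> cnt X Y g = cnt X Y g'"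
begin

definition blk :: "int \<Rightarrow> int set" where
  "blk g = (THE X. X \<in> D \<and> g \<in> X)"

lemma blk_uniq: "X \<in> D \<Longrightarrow> g \<in> X \<Longrightarrow> Y \<in> D \<Longrightarrow> g \<in> Y \<Longrightarrow> X = Y"
  using disj by blast

lemma blk_props: "blk g \<in> D \<and> g \<in> blk g"
proof -
  obtain X where X: "X \<in> D" "g \<in> X" using cover by blast
  have "blk g = X" unfolding blk_def
    by (rule the_equality) (use X blk_uniq in auto)
  thus ?thesis using X by simp
qed

lemma blk_in: "blk g \<in> D" and mem_blk: "g \<in> blk g"
  using blk_props by auto

lemma blk_eq: "X \<in> D \<Longrightarrow> g \<in> X \<Longrightarrow> blk g = X"
  using blk_uniq blk_in mem_blk by blast

lemma G:
  assumes bc: "\<And>Z g g'. Z \<in> D \<Longrightarrow> g \<in> Z \<Longrightarrow> g' \<in> Z \<Longrightarrow> f g = f g'"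
    and A: "finite A" "\<And>z. f z \<noteq> 0 \<Longrightarrow> z \<in> A"
    and Y: "Y \<in> D" and Z: "Z \<in> D" "g \<in> Z" "g' \<in> Z"
  shows "(\<Sum>y\<in>Y. f (g - y)) = (\<Sum>y\<in>Y. (f (g' - y) :: nat))"
proof -
  define AA where "AA = blk ` A"
  define fr where "fr W = f (SOME z. z \<in> W)" for W
  have finY: "finite Y" using fin Y by blast
  have finAA: "finite AA" unfolding AA_def using A(1) by simp
  have frW: "fr W = f z" if "W \<in> D" "z \<in> W" for W z
  proof -
    have "(SOME z. z \<in> W) \<in> W" by (rule someI[of "\<lambda>z. z \<in> W", OF that(2)])
    thus ?thesis unfolding fr_def by (rule bc[OF that(1) _ that(2)])
  qed
  have rep: "f z = (\<Sum>W\<in>AA. fr W * (if z \<in> W then 1 else 0))" for z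
  proof -
    have "(\<Sum>W\<in>AA. fr W * (if z \<in> W then 1 else 0)) = (\<Sum>W\<in>AA. if W = blk z then fr W else 0)"
    proof (intro sum.cong refl)
      fix W assume "W \<in> AA"
      hence "W \<in> D" unfolding AA_def using blk_in by auto
      hence "z \<in> W \<longleftrightarrow> W = blk z" using blk_eq mem_blk by blast
      thus "fr W * (if z \<in> W then 1 else 0) = (if W = blk z then fr W else 0)" by simp
    qed
    also have "\<dots> = (if blk z \<in> AA then fr (blk z) else 0)"
      using finAA by (simp add: sum.delta)
    also have "\<dots> = f z"
    proof (cases "blk z \<in> AA")
      case True
      then show ?thesis using frW[OF blk_in mem_blk] by simp
    next
      case False
      hence "z \<notin> A" unfolding AA_def by auto
      then show ?thesis using A(2) False by auto
    qed
    finally show ?thesis by (rule sym)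
  qed
  have cardeq: "(\<Sum>y\<in>Y. (if h - y \<in> W then 1 else 0)) = cnt W Y h" for h W
  proof -
    have "(\<Sum>y\<in>Y. (if h - y \<in> W then 1 else 0)) = (\<Sum>y\<in>{y\<in>Y. h - y \<in> W}. (1::nat))"
      by (rule sum.inter_filter[symmetric, OF finY])
    also have "\<dots> = card {y\<in>Y. h - y \<in> W}" by simp
    also have "\<dots> = card ((\<lambda>y. (h - y, y)) ` {y\<in>Y. h - y \<in> W})"
      by (rule card_image[symmetric]) (simp add: inj_on_def)
    also have "(\<lambda>y. (h - y, y)) ` {y\<in>Y. h - y \<in> W} = {(x, y). x \<in> W \<and> y \<in> Y \<and> x + y = h}"
    proof (intro set_eqI iffI)
      fix p assume "p \<in> {(x, y). x \<in> W \<and> y \<in> Y \<and> x + y = h}"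
      then obtain x y where p: "p = (x, y)" "x \<in> W" "y \<in> Y" "x + y = h" by blast
      then show "p \<in> (\<lambda>y. (h - y, y)) ` {y\<in>Y. h - y \<in> W}"
        by (intro image_eqI[where x=y]) auto
    qed auto
    finally show ?thesis unfolding cnt_def .
  qed
  have main: "(\<Sum>y\<in>Y. f (h - y)) = (\<Sum>W\<in>AA. fr W * cnt W Y h)" for h
  proof -
    have "(\<Sum>y\<in>Y. f (h - y)) = (\<Sum>y\<in>Y. \<Sum>W\<in>AA. fr W * (if h - y \<in> W then 1 else 0))"
      by (intro sum.cong refl) (rule rep)
    also have "\<dots> = (\<Sum>W\<in>AA. \<Sum>y\<in>Y. fr W * (if h - y \<in> W then 1 else 0))"
      by (rule sum.swap)
    also have "\<dots> = (\<Sum>W\<in>AA. fr W * (\<Sum>y\<in>Y. (if h - y \<in> W then 1 else 0)))"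
      by (simp add: sum_distrib_left)
    also have "\<dots> = (\<Sum>W\<in>AA. fr W * cnt W Y h)"
      using cardeq by simp
    finally show ?thesis .
  qed
  have "(\<Sum>W\<in>AA. fr W * cnt W Y g) = (\<Sum>W\<in>AA. fr W * cnt W Y g')"
  proof (intro sum.cong refl)
    fix W assume "W \<in> AA"
    hence "W \<in> D" unfolding AA_def using blk_in by auto
    thus "fr W * cnt W Y g = fr W * cnt W Y g'" using F[OF _ Y Z] by simp
  qed
  thus ?thesis using main[of g] main[of g'] by simp
qed

lemma tup_bc:
  assumes X: "X \<in> D" and Z: "Z \<in> D" "g \<in> Z" "g' \<in> Z"
  shows "tup X k g = tup X k g'"
  using Z
proof (induction k arbitrary: Z g g')
  case 0
  have "g = 0 \<longleftrightarrow> g' = 0"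
    using blk_uniq[OF 0(1) 0(2) zero] blk_uniq[OF 0(1) 0(3) zero] 0 by auto
  thus ?case by (simp add: tup_0)
next
  case (Suc k)
  have finX: "finite X" using fin X by blast
  let ?A = "sum_list ` {xs. set xs \<subseteq> X \<and> length xs = k}"
  have "finite ?A" using finite_lists_length_eq[OF finX] by blast
  moreover have "z \<in> ?A" if "tup X k z \<noteq> 0" for z
  proof -
    from that have "{xs. set xs \<subseteq> X \<and> length xs = k \<and> sum_list xs = z} \<noteq> {}"
      unfolding tup_def by (metis card.empty)
    thus ?thesis by blast
  qed
  ultimately have "(\<Sum>y\<in>X. tup X k (g - y)) = (\<Sum>y\<in>X. tup X k (g' - y))"
    by (intro G[OF Suc.IH _ _ X Suc.prems]) auto
  thus ?case by (simp add: tup_Suc[OF finX])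
qed


lemma core:
  assumes X: "X \<in> D" and x: "x \<in> X" and k: "k \<ge> 2" "int k > Max X - Min X"
  shows "blk (int k * x) = blk (int k * Max X)"
proof -
  define t where "t = Max X"
  define s where "s = Min X"
  have finX: "finite X" "X \<noteq> {}" using fin X by auto
  have tX: "t \<in> X" and sX: "s \<in> X" using finX by (simp_all add: t_def s_def)
  have le: "s \<le> y \<and> y \<le> t" if "y \<in> X" for y using finX that by (simp add: t_def s_def)
  have topt: "\<forall>y\<in>X. y \<le> t" using le by blast
  have dil: "\<exists>c\<in>X. p = int m * c" if "m \<ge> 1" "p \<in> blk (int m * t)" for m p
  proof -
    have "tup X m p = tup X m (int m * t)" using tup_bc[OF X blk_in that(2) mem_blk] .
    also have "\<dots> = 1" using tup_top[OF tX topt] .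
    finally show ?thesis using tup_one that(1) by blast
  qed
  define Bk where "Bk = blk (int k * t)"
  define Bk1 where "Bk1 = blk (int (k-1) * t)"
  have ik: "int (k - 1) = int k - 1" using k by simp
  have BkD: "Bk \<in> D" "uminus ` Bk1 \<in> D" unfolding Bk_def Bk1_def using blk_in neg by auto
  define T where "T g = {(p, q). p \<in> Bk \<and> q \<in> uminus ` Bk1 \<and> p + q = g}" for g
  have cT: "cnt Bk (uminus ` Bk1) g = card (T g)" for g unfolding cnt_def T_def ..
  have finT: "finite (T g)" for g
  proof (rule finite_subset)
    show "T g \<subseteq> Bk \<times> uminus ` Bk1" unfolding T_def by auto
    show "finite (Bk \<times> uminus ` Bk1)" using fin BkD by auto
  qed
  have m1: "int k * t \<in> Bk" unfolding Bk_def by (rule mem_blk)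
  have m2: "- (int (k-1) * t) \<in> uminus ` Bk1" unfolding Bk1_def by (rule imageI[OF mem_blk])
  have "(int k * t, - (int (k-1) * t)) \<in> T t"
    unfolding T_def using m1 m2 ik by (simp add: algebra_simps)
  hence "T t \<noteq> {}" by (intro notI) simp
  hence "card (T t) \<noteq> 0" using finT[of t] by simp
  moreover have "card (T x) = card (T t)"
    using F[OF BkD X x tX] unfolding cT .
  ultimately have "card (T x) \<noteq> 0" by simp
  hence "T x \<noteq> {}" by (intro notI) simp
  then obtain p q' where "(p, q') \<in> T x" by auto
  then obtain q where pq: "p \<in> Bk" "q \<in> Bk1" "p - q = x" unfolding T_def by auto
  obtain c where c: "c \<in> X" "p = int k * c" using dil[of k p] pq(1) k unfolding Bk_def by auto
  have k1: "k - 1 \<ge> 1" using k by simp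
  obtain d where d: "d \<in> X" "q = int (k-1) * d" using dil[OF k1 pq(2)[unfolded Bk1_def]] by blast
  have eq: "int k * (c - d) = x - d" using pq(3) c(2) d(2) ik by (simp add: algebra_simps)
  have "c = d"
  proof (rule ccontr)
    assume "c \<noteq> d"
    hence "c - d \<ge> 1 \<or> c - d \<le> -1" by linarith
    thus False
    proof
      assume "c - d \<ge> 1"
      hence "int k * (c - d) \<ge> int k * 1" by (intro mult_left_mono) auto
      thus False using eq le[OF x] le[OF d(1)] k(2) unfolding t_def s_def by linarith
    next
      assume "c - d \<le> -1"
      hence "int k * (c - d) \<le> int k * (-1)" by (intro mult_left_mono) auto
      thus False using eq le[OF x] le[OF d(1)] k(2) unfolding t_def s_def by linarith
    qed
  qed
  hence "x = c" using eq by simp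
  hence "int k * x \<in> blk (int k * t)" using pq(1) c(2) unfolding Bk_def by simp
  from blk_eq[OF blk_in this] show ?thesis unfolding t_def .
qed

lemma interior:
  assumes X: "X \<in> D" and x: "x \<in> X" and lt: "Min X < x" "x < Max X"
  shows False
proof -
  define t where "t = Max X"
  define s where "s = Min X"
  have finX: "finite X" "X \<noteq> {}" using fin X by auto
  have tX: "t \<in> X" and sX: "s \<in> X" using finX by (simp_all add: t_def s_def)
  have topt: "\<forall>y\<in>X. y \<le> t" using finX by (simp add: t_def)
  define k where "k = 2 * nat (t - s)"
  have k: "k \<ge> 2" "int k > Max X - Min X" using lt unfolding k_def t_def s_def by auto
  have b: "blk (int k * x) = blk (int k * t)" using core[OF X x k] unfolding t_def .
  have "int k * x \<in> blk (int k * t)" using mem_blk[of "int k * x"] b by simp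
  then have "tup X k (int k * x) = tup X k (int k * t)"
    by (rule tup_bc[OF X blk_in[of "int k * t"] _ mem_blk[of "int k * t"]])
  also have "\<dots> = 1" using tup_top[OF tX topt] .
  finally have "tup X k (int k * x) = 1" .
  moreover have "tup X k (int k * x) \<ge> 2"
    using tup_two[OF finX(1) x tX sX] lt unfolding k_def t_def s_def by simp
  ultimately show False by simp
qed


lemma sing_mult:
  assumes m: "{m} \<in> D" and j: "j \<ge> 1"
  shows "blk (int j * m) = {int j * m}"
proof
  show "blk (int j * m) \<subseteq> {int j * m}"
  proof
    fix p assume p: "p \<in> blk (int j * m)"
    have "tup {m} j p = tup {m} j (int j * m)"
      by (rule tup_bc[OF m blk_in p mem_blk])
    also have "\<dots> = 1" by (rule tup_top) auto
    finally have "\<exists>c\<in>{m}. p = int j * c" using tup_one j by blast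
    thus "p \<in> {int j * m}" by simp
  qed
  show "{int j * m} \<subseteq> blk (int j * m)" using mem_blk by simp
qed

lemma main:
  assumes C: "C \<in> D" and one: "1 \<in> C"
  shows "C = {1} \<or> C = {1, -1}"
proof (rule ccontr)
  assume neg1: "\<not> (C = {1} \<or> C = {1, -1})"
  define t where "t = Max C"
  define s where "s = Min C"
  have finC: "finite C" "C \<noteq> {}" using fin C by auto
  have le: "s \<le> y \<and> y \<le> t" if "y \<in> C" for y using finC that by (simp add: t_def s_def)
  have st: "y = s \<or> y = t" if "y \<in> C" for y
  proof (rule ccontr)
    assume "\<not> (y = s \<or> y = t)"
    hence "Min C < y" "y < Max C" using le[OF that] unfolding s_def t_def by auto
    thus False using interior[OF C that] by blast
  qed
  obtain c where c: "c \<in> C" "c \<noteq> 1" using neg1 one by blast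
  have Ceq: "C = {1, c}"
  proof
    show "C \<subseteq> {1, c}"
    proof
      fix y assume "y \<in> C"
      thus "y \<in> {1, c}" using st[OF \<open>y \<in> C\<close>] st[OF one] st[OF c(1)] c(2) by auto
    qed
    show "{1, c} \<subseteq> C" using one c by auto
  qed
  have c0: "c \<noteq> 0"
  proof
    assume "c = 0"
    hence "C = {0}" using blk_uniq[OF C _ zero] c(1) by blast
    thus False using one by simp
  qed
  have cm1: "c \<noteq> -1" using neg1 Ceq by auto
  define h where "h = 1 + c"
  have h0: "h \<noteq> 0" using cm1 unfolding h_def by simp
  have Rh: "{(x, y). x \<in> C \<and> y \<in> C \<and> x + y = h} = {(1, c), (c, 1)}"
    using c(2) unfolding Ceq h_def by auto
  have "cnt C C h = 2" unfolding cnt_def Rh using c(2) by simp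
  have bh: "blk h = {h}"
  proof
    show "blk h \<subseteq> {h}"
    proof
      fix g assume g: "g \<in> blk h"
      have "cnt C C g = cnt C C h" by (rule F[OF C C blk_in g mem_blk])
      hence g2: "cnt C C g = 2" using \<open>cnt C C h = 2\<close> by simp
      show "g \<in> {h}"
      proof (rule ccontr)
        assume "g \<notin> {h}"
        hence "{(x, y). x \<in> C \<and> y \<in> C \<and> x + y = g} \<subseteq> (if g = 2 then {(1, 1)} else {(c, c)})"
          using c(2) unfolding Ceq h_def by auto
        hence "cnt C C g \<le> card (if g = 2 then {(1::int, 1::int)} else {(c, c)})"
          unfolding cnt_def by (intro card_mono) auto
        thus False using g2 by (simp split: if_splits)
      qed
    qed
    show "{h} \<subseteq> blk h" using mem_blk by simp
  qed
  obtain m :: nat where m: "m > 0" "{int m} \<in> D"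
  proof (cases "h > 0")
    case True
    thus ?thesis using that[of "nat h"] bh blk_in[of h] by simp
  next
    case False
    hence "h < 0" using h0 by simp
    moreover have "uminus ` {h} \<in> D" using neg[OF blk_in[of h]] bh by simp
    ultimately show ?thesis using that[of "nat (- h)"] by simp
  qed
  define j :: nat where "j = nat (t - s) + 2"
  define K :: nat where "K = 1 + j * m"
  have jm: "j * m \<ge> j" using m(1) by simp
  have K: "K \<ge> 2" "int K > Max C - Min C" using jm unfolding K_def j_def s_def[symmetric] t_def[symmetric]
    by linarith+
  have b1: "blk (int K * c) = blk (int K * t)" using core[OF C c(1) K] unfolding t_def .
  have b2: "blk (int K * 1) = blk (int K * t)" using core[OF C one K] unfolding t_def .
  have Kc: "int K * c \<in> blk (int K)" using b1 b2 mem_blk[of "int K * c"] by simp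
  have jm1: "j * m \<ge> 1" using m(1) unfolding j_def by simp
  have j1: "j \<ge> 1" unfolding j_def by simp
  have "blk (int j * int m) = {int j * int m}" by (rule sing_mult[OF m(2) j1])
  hence sD: "{int (j * m)} \<in> D" using blk_in[of "int j * int m"] by simp
  have "cnt C {int (j * m)} (int K * c) = cnt C {int (j * m)} (int K)"
    by (rule F[OF C sD blk_in Kc mem_blk])
  moreover have "(1, int (j * m)) \<in> {(x, y). x \<in> C \<and> y \<in> {int (j * m)} \<and> x + y = int K}"
    using one unfolding K_def by simp
  hence ne: "{(x, y). x \<in> C \<and> y \<in> {int (j * m)} \<and> x + y = int K} \<noteq> {}" by blast
  have finS: "finite {(x, y). x \<in> C \<and> y \<in> {int (j * m)} \<and> x + y = int K}"
    by (rule finite_subset[of _ "C \<times> {int (j*m)}"]) (auto simp: finC)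
  have "cnt C {int (j * m)} (int K) \<noteq> 0" unfolding cnt_def using finS ne by simp
  ultimately have "cnt C {int (j * m)} (int K * c) \<noteq> 0" by simp
  hence "{(x, y). x \<in> C \<and> y \<in> {int (j * m)} \<and> x + y = int K * c} \<noteq> {}"
    unfolding cnt_def by (metis card.empty)
  then obtain y where y: "y \<in> C" "y + int (j * m) = int K * c" by auto
  have iK: "int K = 1 + int (j * m)" unfolding K_def by simp
  have jmpos: "int (j * m) > 0" using jm1 by simp
  from y(1) Ceq have "y = 1 \<or> y = c" by auto
  thus False
  proof
    assume "y = 1"
    hence "int K * c = int K" using y(2) iK by simp
    hence "int K * (c - 1) = 0" by (simp add: right_diff_distrib)
    thus False using c(2) K by simp
  next
    assume "y = c"
    hence "c + int (j * m) = (1 + int (j * m)) * c" using y(2) iK by simp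
    hence "int (j * m) * (c - 1) = 0" by (simp add: algebra_simps)
    thus False using c(2) jmpos by auto
  qed
qed

end

theorem lemma3p1:
  fixes \<D> :: "int set set" and C :: "int set"
  assumes "schur_partition TYPE('a::field_char_0) \<D>"
    and "C \<in> \<D>"
    and "1 \<in> C"
  shows "C = {1} \<or> C = {1, -1}"
proof -
  have "SP \<D>"
  proof
    show "\<And>C. C \<in> \<D> \<Longrightarrow> C \<noteq> {} \<and> finite C"
      "\<Union> \<D> = UNIV"
      "\<And>C E. C \<in> \<D> \<Longrightarrow> E \<in> \<D> \<Longrightarrow> C \<noteq> E \<Longrightarrow> C \<inter> E = {}"
      "{0} \<in> \<D>"
      "\<And>C. C \<in> \<D> \<Longrightarrow> uminus ` C \<in> \<D>"
      using assms(1) unfolding schur_partition_def by blast+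
    show "\<And>X Y Z g g'. X \<in> \<D> \<Longrightarrow> Y \<in> \<D> \<Longrightarrow> Z \<in> \<D> \<Longrightarrow> g \<in> Z \<Longrightarrow> g' \<in> Z
              \<Longrightarrow> cnt X Y g = cnt X Y g'"
      by (rule F1[OF assms(1)])
  qed
  thus ?thesis using SP.main assms(2,3) by blast
qed

end
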